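(* Let $\mathsf{A}\subset GL_2(\mathbb{R})$ with $\mathscr{R}(\mathsf{A})\neq\emptyset$ be such that $\mathcal{S}(\mathsf{A})$ is almost multiplicative. Then $\mathcal{S}(\mathsf{A})$ does not contain parabolic elements and $\mathscr{R}(\mathsf{A})$ does not contain nilpotent elements.
   Context: $\|\cdot\|$ is the operator norm. $\mathcal{S}(\mathsf{A})$ is the semigroup of finite products of elements of $\mathsf{A}$; $\mathscr{S}(\mathsf{A})=\overline{\mathbb{R}\mathcal{S}(\mathsf{A})}\subset M_2(\mathbb{R})$; $\mathscr{R}(\mathsf{A})=\{A\in\mathscr{S}(\mathsf{A}):\operatorname{rank}(A)=1\}$. A semigroup $\mathcal{S}$ is almost multiplicative if there is $\kappa>0$ with $\|AB\|\ge\kappa\|A\|\|B\|$ for all $A,B\in\mathcal{S}$. A matrix is parabolic if it has only one eigenspace (its single eigenvalue has geometric multiplicity one). *)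

theory Defs
  imports "HOL-Analysis.Analysis"
begin

type_synonym mat2 = "real^2^2"

definition opnorm :: "mat2 \<Rightarrow> real" where
  "opnorm M = onorm (\<lambda>x. M *v x)"

definition semigrp :: "mat2 set \<Rightarrow> mat2 set" where
  "semigrp A = {M. \<exists>xs. xs \<noteq> [] \<and> set xs \<subseteq> A \<and> M = foldr (**) xs (mat 1)}"

definition scaled_closure :: "mat2 set \<Rightarrow> mat2 set" where
  "scaled_closure A = closure {c *\<^sub>R M | c M. M \<in> semigrp A}"

definition rank_one_part :: "mat2 set \<Rightarrow> mat2 set" where
  "rank_one_part A = {M \<in> scaled_closure A. rank M = 1}"

definition almost_multiplicative :: "mat2 set \<Rightarrow> bool" where
  "almost_multiplicative S \<longleftrightarrow>
     (\<exists>\<kappa>>0. \<forall>A\<in>S. \<forall>B\<in>S. opnorm (A ** B) \<ge> \<kappa> * opnorm A * opnorm B)"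

definition is_eigenvalue :: "mat2 \<Rightarrow> real \<Rightarrow> bool" where
  "is_eigenvalue M l \<longleftrightarrow> (\<exists>v. v \<noteq> 0 \<and> M *v v = l *\<^sub>R v)"

definition eigenspace :: "mat2 \<Rightarrow> real \<Rightarrow> (real^2) set" where
  "eigenspace M l = {v. M *v v = l *\<^sub>R v}"

definition parabolic :: "mat2 \<Rightarrow> bool" where
  "parabolic M \<longleftrightarrow>
     (\<exists>l. (\<forall>m. is_eigenvalue M m \<longleftrightarrow> m = l) \<and> dim (eigenspace M l) = 1)"

fun mat_pow :: "mat2 \<Rightarrow> nat \<Rightarrow> mat2" where
  "mat_pow M 0 = mat 1"
| "mat_pow M (Suc k) = M ** mat_pow M k"

definition nilpotent :: "mat2 \<Rightarrow> bool" where
  "nilpotent M \<longleftrightarrow> (\<exists>k. mat_pow M k = 0)"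

end

theory Submission
  imports Defs
begin

lemma mat2_eq_iff: "(X::real^2^2) = Y \<longleftrightarrow> X$1$1 = Y$1$1 \<and> X$1$2 = Y$1$2 \<and> X$2$1 = Y$2$1 \<and> X$2$2 = Y$2$2"
  by (auto simp: vec_eq_iff forall_2)

lemma mult2: "((X::real^2^2) ** Y)$i$j = X$i$1*Y$1$j + X$i$2*Y$2$j"
  by (simp add: matrix_matrix_mult_def sum_2)

lemma mv2: "((X::real^2^2) *v w)$i = X$i$1*w$1 + X$i$2*w$2"
  by (simp add: matrix_vector_mult_def sum_2)

lemma id2: "(mat 1::real^2^2)$1$1 = 1" "(mat 1::real^2^2)$1$2 = 0" "(mat 1::real^2^2)$2$1 = 0" "(mat 1::real^2^2)$2$2 = 1"
  by (simp_all add: mat_def)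

lemma vec2_eq_iff: "(x::real^2) = y \<longleftrightarrow> x$1 = y$1 \<and> x$2 = y$2"
  by (auto simp: vec_eq_iff forall_2)

lemma foldr_mult: "foldr (**) (xs @ ys) (mat 1) = foldr (**) xs (mat 1) ** foldr (**) ys (mat 1)"
  for xs ys :: "mat2 list"
  by (induction xs) (auto simp: matrix_mul_assoc)

lemma sg_mult: "X \<in> semigrp A \<Longrightarrow> Y \<in> semigrp A \<Longrightarrow> X ** Y \<in> semigrp A"
  unfolding semigrp_def
proof clarify
  fix xs ys assume "xs \<noteq> []" "set xs \<subseteq> A" "ys \<noteq> []" "set ys \<subseteq> A"
  then show "\<exists>zs. zs \<noteq> [] \<and> set zs \<subseteq> A \<and> foldr (**) xs (mat 1) ** foldr (**) ys (mat 1) = foldr (**) zs (mat 1)"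
    apply (intro exI[of _ "xs @ ys"]) using foldr_mult[of xs ys] by auto
qed

lemma pow_sg: "M \<in> semigrp A \<Longrightarrow> n \<ge> 1 \<Longrightarrow> mat_pow M n \<in> semigrp A"
proof (induction n)
  case 0 then show ?case by simp
next
  case (Suc n)
  then show ?case by (cases "n = 0") (auto intro: sg_mult)
qed

lemma pow_add: "mat_pow M (m + n) = mat_pow M m ** mat_pow M n"
  by (induction m) (auto simp: matrix_mul_assoc)

lemma opn_add: "opnorm (X + Y) \<le> opnorm X + opnorm Y"
  unfolding opnorm_def matrix_vector_mult_add_rdistrib
  by (rule onorm_triangle) auto

lemma opn_scale: "opnorm (c *\<^sub>R X) = \<bar>c\<bar> * opnorm X"
  unfolding opnorm_def scaleR_matrix_vector_assoc[symmetric]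
  by (rule onorm_scaleR) auto

lemma opn_id: "opnorm (mat 1) = 1"
proof -
  have "(*v) (mat 1) = (\<lambda>x::real^2. x)" by (rule ext) simp
  then show ?thesis unfolding opnorm_def by (simp add: onorm_id)
qed

lemma opn_ge0: "opnorm X \<ge> 0"
  unfolding opnorm_def by (rule onorm_pos_le) auto

lemma opn_pos: "X \<noteq> 0 \<Longrightarrow> opnorm X > 0"
  unfolding opnorm_def
  by (subst onorm_pos_lt) (auto simp: matrix_eq)

lemma opn_0: "opnorm 0 = 0"
  using opn_scale[of 0 "mat 1"] by simp

lemma scale_mult_l: "((p::real) *\<^sub>R (X::mat2)) ** (Y::mat2) = p *\<^sub>R (X ** Y)"
  by (subst mat2_eq_iff) (simp add: mult2 algebra_simps)

lemma scale_mult_r: "(X::mat2) ** ((p::real) *\<^sub>R (Y::mat2)) = p *\<^sub>R (X ** Y)"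
  by (subst mat2_eq_iff) (simp add: mult2 algebra_simps)

lemma add_mult_r: "((X::mat2) + Y) ** (Z::mat2) = X ** Z + Y ** Z"
  by (subst mat2_eq_iff) (simp add: mult2 algebra_simps)

lemma det_eig:
  fixes M :: mat2
  assumes "(M$1$1 - m) * (M$2$2 - m) - M$1$2 * M$2$1 = 0"
  shows "is_eigenvalue M m"
proof -
  let ?a = "M$1$1" and ?b = "M$1$2" and ?c = "M$2$1" and ?d = "M$2$2"
  show ?thesis
  proof (cases "?b = 0 \<and> ?a = m")
    case False
    show ?thesis unfolding is_eigenvalue_def
      apply (rule exI[of _ "vector [- ?b, ?a - m]"])
      using False assms by (auto simp: vec2_eq_iff mv2 algebra_simps)
  next
    case T1: True
    show ?thesis
    proof (cases "?c = 0 \<and> ?d = m")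
      case False
      show ?thesis unfolding is_eigenvalue_def
        apply (rule exI[of _ "vector [?d - m, - ?c]"])
        using False T1 assms by (auto simp: vec2_eq_iff mv2 algebra_simps)
    next
      case True
      show ?thesis unfolding is_eigenvalue_def
        apply (rule exI[of _ "vector [1, 0]"])
        using True T1 by (auto simp: vec2_eq_iff mv2 algebra_simps)
    qed
  qed
qed

lemma para_struct:
  fixes M :: mat2
  assumes "parabolic M"
  shows "\<exists>l N. M = l *\<^sub>R mat 1 + N \<and> N ** N = 0 \<and> N \<noteq> 0"
proof -
  obtain l where H1: "\<And>m. is_eigenvalue M m \<longleftrightarrow> m = l" and H2: "dim (eigenspace M l) = 1"
    using assms unfolding parabolic_def by blast
  have "eigenspace M l \<noteq> {0}"
  proof
    assume "eigenspace M l = {0}"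
    hence "dim (eigenspace M l) = 0" by simp
    with H2 show False by simp
  qed
  moreover have "0 \<in> eigenspace M l" by (simp add: eigenspace_def)
  ultimately obtain v where v: "v \<noteq> 0" "M *v v = l *\<^sub>R v" unfolding eigenspace_def by blast
  have "eigenspace M l \<noteq> UNIV"
  proof
    assume "eigenspace M l = UNIV"
    hence "dim (eigenspace M l) = 2" by simp
    with H2 show False by simp
  qed
  then obtain w where w: "M *v w \<noteq> l *\<^sub>R w" unfolding eigenspace_def by blast
  let ?a = "M$1$1" and ?b = "M$1$2" and ?c = "M$2$1" and ?d = "M$2$2"
  have e1: "(?a - l) * v$1 + ?b * v$2 = 0" and e2: "?c * v$1 + (?d - l) * v$2 = 0"
    using v(2) by (auto simp: vec2_eq_iff mv2 algebra_simps)
  have vv: "v$1 \<noteq> 0 \<or> v$2 \<noteq> 0" using v(1) by (auto simp: vec2_eq_iff)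
  have det: "(?a - l) * (?d - l) - ?b * ?c = 0"
  proof -
    have "((?a - l) * (?d - l) - ?b * ?c) * v$1 = (?d - l) * ((?a - l) * v$1 + ?b * v$2) - ?b * (?c * v$1 + (?d - l) * v$2)"
      by (simp add: algebra_simps)
    hence 1: "((?a - l) * (?d - l) - ?b * ?c) * v$1 = 0" using e1 e2 by simp
    have "((?a - l) * (?d - l) - ?b * ?c) * v$2 = (?a - l) * (?c * v$1 + (?d - l) * v$2) - ?c * ((?a - l) * v$1 + ?b * v$2)"
      by (simp add: algebra_simps)
    hence "((?a - l) * (?d - l) - ?b * ?c) * v$2 = 0" using e1 e2 by simp
    with 1 show ?thesis using vv by auto
  qed
  have "is_eigenvalue M (?a + ?d - l)"
    by (rule det_eig) (use det in \<open>simp add: algebra_simps\<close>)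
  hence tr: "?a + ?d = 2 * l" using H1 by auto
  define N where "N = M - l *\<^sub>R mat 1"
  have "M = l *\<^sub>R mat 1 + N" by (simp add: N_def)
  moreover have "N ** N = 0"
  proof -
    have d: "?d = 2 * l - ?a" using tr by simp
    show ?thesis unfolding N_def
      apply (subst mat2_eq_iff)
      apply (simp add: mult2 id2)
      using det tr apply (intro conjI; algebra)
      done
  qed
  moreover have "N \<noteq> 0"
  proof
    assume "N = 0"
    hence "M = l *\<^sub>R mat 1" by (simp add: N_def)
    hence "M *v w = l *\<^sub>R w" by (simp add: scaleR_matrix_vector_assoc[symmetric])
    with w show False by simp
  qed
  ultimately show ?thesis by blast
qed


lemma pow_formula:
  fixes N :: mat2
  assumes "N ** N = 0"
  shows "mat_pow (l *\<^sub>R mat 1 + N) n = (l^n) *\<^sub>R mat 1 + (real n * l^(n-1)) *\<^sub>R N"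
proof (induction n)
  case 0 then show ?case by simp
next
  case (Suc n)
  define p where "p = l^n"
  define q where "q = real n * l^(n-1)"
  have "mat_pow (l *\<^sub>R mat 1 + N) (Suc n) = (l *\<^sub>R mat 1 + N) ** (p *\<^sub>R mat 1 + q *\<^sub>R N)"
    using Suc by (simp add: p_def q_def)
  also have "\<dots> = (l * p) *\<^sub>R mat 1 + (l * q) *\<^sub>R N + p *\<^sub>R N"
    by (simp add: matrix_add_ldistrib add_mult_r scale_mult_l scale_mult_r assms scaleR_add_right algebra_simps)
  also have "\<dots> = (l * p) *\<^sub>R mat 1 + (l * q + p) *\<^sub>R N"
    by (simp add: scaleR_add_left)
  also have "l * q + p = real (Suc n) * l^(Suc n - 1)"
    by (cases n) (auto simp: algebra_simps p_def q_def)
  finally show ?case by (simp add: p_def)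
qed

lemma opn_P_upper: "opnorm (mat 1 + k *\<^sub>R N) \<le> 1 + \<bar>k\<bar> * opnorm N"
  using opn_add[of "mat 1" "k *\<^sub>R N"] by (simp add: opn_id opn_scale)

lemma opn_P_lower: "opnorm (mat 1 + k *\<^sub>R N) \<ge> \<bar>k\<bar> * opnorm N - 1"
proof -
  have "k *\<^sub>R N = (mat 1 + k *\<^sub>R N) + (-1) *\<^sub>R mat 1" by simp
  hence "opnorm (k *\<^sub>R N) \<le> opnorm (mat 1 + k *\<^sub>R N) + opnorm ((-1) *\<^sub>R (mat 1::mat2))"
    by (metis opn_add)
  moreover have "opnorm ((-1) *\<^sub>R (mat 1::mat2)) = 1" by (simp only: opn_scale opn_id)
  moreover have "opnorm (k *\<^sub>R N) = \<bar>k\<bar> * opnorm N" by (rule opn_scale)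
  ultimately show ?thesis by linarith
qed

lemma no_para:
  fixes M :: mat2
  assumes am: "\<forall>X\<in>semigrp A. \<forall>Y\<in>semigrp A. opnorm (X ** Y) \<ge> \<kappa> * opnorm X * opnorm Y"
    and kp: "\<kappa> > 0" and MS: "M \<in> semigrp A" and pM: "parabolic M"
  shows False
proof -
  obtain l N where MN: "M = l *\<^sub>R mat 1 + N" and NN: "N ** N = 0" and N0: "N \<noteq> 0"
    using para_struct[OF pM] by blast
  define a where "a = opnorm N"
  have a0: "a > 0" using opn_pos[OF N0] by (simp add: a_def)
  show False
  proof (cases "l = 0")
    case True
    hence "M = N" using MN by simp
    hence "opnorm (M ** M) = 0" using NN by (simp add: opn_0)
    moreover have "\<kappa> * opnorm M * opnorm M > 0" using kp a0 \<open>M = N\<close> by (simp add: a_def)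
    ultimately show False using am MS by fastforce
  next
    case False
    define P where "P k = mat 1 + k *\<^sub>R N" for k
    have pw: "mat_pow M m = (l^m) *\<^sub>R P (real m / l)" for m
    proof -
      have "(real m * l^(m-1)) = l^m * (real m / l)"
        using False by (cases m) (auto simp: field_simps)
      thus ?thesis unfolding MN pow_formula[OF NN] P_def
        by (simp add: scaleR_add_right)
    qed
    have on: "opnorm (mat_pow M m) = \<bar>l\<bar>^m * opnorm (P (real m / l))" for m
      by (simp add: pw opn_scale power_abs)
    have ineq: "opnorm (P (real (2*n) / l)) \<ge> \<kappa> * opnorm (P (real n / l))^2" if n1: "n \<ge> 1" for n
    proof -
      have XS: "mat_pow M n \<in> semigrp A" using pow_sg[OF MS n1] .
      have "mat_pow M (2*n) = mat_pow M n ** mat_pow M n" using pow_add[of M n n] by (simp add: mult_2)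
      hence "opnorm (mat_pow M (2*n)) \<ge> \<kappa> * opnorm (mat_pow M n) * opnorm (mat_pow M n)"
        using am XS by metis
      moreover have LL: "\<bar>l\<bar>^(2*n) = \<bar>l\<bar>^n * \<bar>l\<bar>^n" by (simp add: mult_2 power_add)
      moreover have "\<kappa> * opnorm (mat_pow M n) * opnorm (mat_pow M n) = \<bar>l\<bar>^(2*n) * (\<kappa> * opnorm (P (real n / l))^2)"
        unfolding on LL by (simp add: power2_eq_square ac_simps)
      moreover have "opnorm (mat_pow M (2*n)) = \<bar>l\<bar>^(2*n) * opnorm (P (real (2*n) / l))" by (rule on)
      ultimately have "\<bar>l\<bar>^(2*n) * opnorm (P (real (2*n) / l)) \<ge> \<bar>l\<bar>^(2*n) * (\<kappa> * opnorm (P (real n / l))^2)"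
        by linarith
      moreover have "\<bar>l\<bar>^(2*n) > 0" using False by simp
      ultimately show ?thesis by (simp add: mult_le_cancel_left_pos)
    qed
    obtain n where n: "real n > (3 + 5/\<kappa>) * \<bar>l\<bar> / a" using reals_Archimedean2 by blast
    define t where "t = real n * a / \<bar>l\<bar>"
    have lpos: "\<bar>l\<bar> > 0" using False by simp
    have t3: "t > 3 + 5/\<kappa>" using n a0 lpos unfolding t_def by (simp add: field_simps)
    have "5/\<kappa> > 0" using kp by simp
    hence "t > 0" using t3 by linarith
    hence n1: "n \<ge> 1" unfolding t_def by (cases "n = 0") auto
    have k1: "\<bar>real n / l\<bar> * a = t" unfolding t_def by (simp add: abs_div)
    have k2: "\<bar>real (2*n) / l\<bar> * a = 2 * t" unfolding t_def by (simp add: abs_div)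
    have up: "opnorm (P (real (2*n) / l)) \<le> 1 + 2 * t"
      using opn_P_upper[of "real (2*n) / l" N] k2 unfolding P_def a_def by simp
    have lo: "opnorm (P (real n / l)) \<ge> t - 1"
      using opn_P_lower[of "real n / l" N] k1 unfolding P_def a_def by simp
    have tm: "t - 1 > 0" "t - 1 > 5/\<kappa>" using t3 \<open>5/\<kappa> > 0\<close> by linarith+
    have "(t - 1)^2 \<le> opnorm (P (real n / l))^2"
      using lo tm by (intro power_mono) auto
    hence "\<kappa> * (t-1)^2 \<le> \<kappa> * opnorm (P (real n / l))^2"
      by (rule mult_left_mono) (use kp in auto)
    hence "\<kappa> * (t-1)^2 \<le> opnorm (P (real (2*n) / l))"
      using ineq[OF n1] by linarith
    moreover have "\<kappa> * (t-1)^2 \<ge> 5 * (t - 1)"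
    proof -
      have "\<kappa> * (t-1) \<ge> 5" using tm(2) kp by (simp add: field_simps)
      hence "\<kappa> * (t-1) * (t-1) \<ge> 5 * (t-1)" using tm(1) by (intro mult_right_mono) auto
      thus ?thesis by (simp add: power2_eq_square mult.assoc)
    qed
    ultimately have "5 * (t - 1) \<le> 1 + 2 * t" using up by linarith
    hence "t \<le> 2" by (simp add: algebra_simps)
    moreover have "3 < 3 + 5/\<kappa>" using kp by simp
    hence "t > 3" using t3 by (rule less_trans)
    ultimately show False by simp
  qed
qed

lemma opn_le_norm: "opnorm (D::mat2) \<le> 4 * norm D"
proof -
  have c: "\<bar>D$i$j\<bar> \<le> norm D" for i j
    using component_le_norm_cart[of "D$i" j] Finite_Cartesian_Product.norm_nth_le[of D i] by linarith
  have "opnorm D \<le> (\<Sum>i\<in>UNIV. \<Sum>j\<in>UNIV. \<bar>D $ i $ j\<bar>)"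
    unfolding opnorm_def by (rule onorm_le_matrix_component_sum)
  also have "\<dots> = \<bar>D$1$1\<bar> + \<bar>D$1$2\<bar> + \<bar>D$2$1\<bar> + \<bar>D$2$2\<bar>" by (simp add: sum_2)
  also have "\<dots> \<le> 4 * norm D" using c[of 1 1] c[of 1 2] c[of 2 1] c[of 2 2] by linarith
  finally show ?thesis .
qed

lemma opn_lip: "\<bar>opnorm X - opnorm Y\<bar> \<le> 4 * norm (X - Y)"
proof -
  have "opnorm X \<le> opnorm Y + opnorm (X - Y)" using opn_add[of Y "X - Y"] by simp
  moreover have "opnorm Y \<le> opnorm X + opnorm (Y - X)" using opn_add[of X "Y - X"] by simp
  moreover have "opnorm (X - Y) \<le> 4 * norm (X - Y)" "opnorm (Y - X) \<le> 4 * norm (X - Y)"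
    using opn_le_norm[of "X - Y"] opn_le_norm[of "Y - X"] by (simp_all add: norm_minus_commute)
  ultimately show ?thesis by linarith
qed

lemma opn_cont: "continuous_on UNIV opnorm"
  unfolding continuous_on_iff
proof (intro ballI allI impI)
  fix X :: mat2 and e :: real assume e: "e > 0"
  show "\<exists>d>0. \<forall>x'\<in>UNIV. dist x' X < d \<longrightarrow> dist (opnorm x') (opnorm X) < e"
  proof (intro exI[of _ "e/4"] conjI ballI impI)
    fix Y assume "dist Y X < e/4"
    hence "4 * norm (Y - X) < e" by (simp add: dist_norm)
    thus "dist (opnorm Y) (opnorm X) < e" using opn_lip[of Y X] by (simp add: dist_real_def)
  qed (use e in simp)
qed

lemma sq_cont: "continuous_on UNIV (\<lambda>X::mat2. X ** X)"
  unfolding matrix_matrix_mult_def by (intro continuous_intros)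

lemma closed_C: "closed {X::mat2. \<kappa> * opnorm X * opnorm X \<le> opnorm (X ** X)}"
proof -
  have c1: "continuous_on UNIV (\<lambda>X::mat2. opnorm (X ** X))"
    using continuous_on_compose2[OF opn_cont sq_cont] by simp
  show ?thesis
    by (rule closed_Collect_le) (use c1 opn_cont in \<open>auto intro!: continuous_intros\<close>)
qed

lemma rank1_sq:
  fixes R :: mat2
  assumes "rank R = 1" and "nilpotent R"
  shows "R ** R = 0" and "R \<noteq> 0"
proof -
  show R0: "R \<noteq> 0" using assms(1) rank_eq_0 by force
  have "rank R \<noteq> CARD(2)" using assms(1) by simp
  then obtain x where x: "x \<noteq> 0" "R *v x = 0" using matrix_nonfull_linear_equations_eq by blast
  let ?a = "R$1$1" and ?b = "R$1$2" and ?c = "R$2$1" and ?d = "R$2$2"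
  have e1: "?a * x$1 + ?b * x$2 = 0" and e2: "?c * x$1 + ?d * x$2 = 0"
    using x(2) by (auto simp: vec2_eq_iff mv2)
  have xx: "x$1 \<noteq> 0 \<or> x$2 \<noteq> 0" using x(1) by (auto simp: vec2_eq_iff)
  have det: "?a * ?d - ?b * ?c = 0"
  proof -
    have "(?a * ?d - ?b * ?c) * x$1 = ?d * (?a * x$1 + ?b * x$2) - ?b * (?c * x$1 + ?d * x$2)"
      by (simp add: algebra_simps)
    hence 1: "(?a * ?d - ?b * ?c) * x$1 = 0" using e1 e2 by simp
    have "(?a * ?d - ?b * ?c) * x$2 = ?a * (?c * x$1 + ?d * x$2) - ?c * (?a * x$1 + ?b * x$2)"
      by (simp add: algebra_simps)
    hence "(?a * ?d - ?b * ?c) * x$2 = 0" using e1 e2 by simp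
    with 1 show ?thesis using xx by auto
  qed
  define \<tau> where "\<tau> = ?a + ?d"
  have RR: "R ** R = \<tau> *\<^sub>R R"
    apply (subst mat2_eq_iff)
    apply (simp add: mult2 \<tau>_def)
    using det by (auto simp: algebra_simps)
  have pw: "mat_pow R (Suc k) = (\<tau>^k) *\<^sub>R R" for k
  proof (induction k)
    case 0 then show ?case by simp
  next
    case (Suc k)
    have "mat_pow R (Suc (Suc k)) = R ** ((\<tau>^k) *\<^sub>R R)" using Suc by simp
    also have "\<dots> = (\<tau>^Suc k) *\<^sub>R R" by (simp add: scale_mult_r RR)
    finally show ?case .
  qed
  obtain k where k: "mat_pow R k = 0" using assms(2) unfolding nilpotent_def by blast
  have "k \<noteq> 0"
  proof
    assume "k = 0"
    hence "(mat 1::mat2) = 0" using k by simp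
    thus False by (simp add: mat2_eq_iff id2)
  qed
  then obtain j where "k = Suc j" by (cases k) auto
  hence "(\<tau>^j) *\<^sub>R R = 0" using k pw by simp
  hence "\<tau> = 0" using R0 by simp
  thus "R ** R = 0" using RR by simp
qed

lemma no_nil:
  assumes am: "\<forall>X\<in>semigrp A. \<forall>Y\<in>semigrp A. opnorm (X ** Y) \<ge> \<kappa> * opnorm X * opnorm Y"
    and kp: "\<kappa> > 0" and R: "R \<in> rank_one_part A" and nR: "nilpotent R"
  shows False
proof -
  have Rc: "R \<in> scaled_closure A" and rk: "rank R = 1" using R unfolding rank_one_part_def by auto
  let ?C = "{X::mat2. \<kappa> * opnorm X * opnorm X \<le> opnorm (X ** X)}"
  have sub: "{c *\<^sub>R M | c M. M \<in> semigrp A} \<subseteq> ?C"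
  proof clarify
    fix c :: real and M assume M: "M \<in> semigrp A"
    have "\<kappa> * opnorm M * opnorm M \<le> opnorm (M ** M)" using am M by blast
    hence "(\<bar>c\<bar> * \<bar>c\<bar>) * (\<kappa> * opnorm M * opnorm M) \<le> (\<bar>c\<bar> * \<bar>c\<bar>) * opnorm (M ** M)"
      by (rule mult_left_mono) simp
    moreover have "(c *\<^sub>R M) ** (c *\<^sub>R M) = (c * c) *\<^sub>R (M ** M)" by (simp add: scale_mult_l scale_mult_r)
    ultimately show "\<kappa> * opnorm (c *\<^sub>R M) * opnorm (c *\<^sub>R M) \<le> opnorm (c *\<^sub>R M ** c *\<^sub>R M)"
      by (simp add: opn_scale abs_mult ac_simps)
  qed
  have "R \<in> ?C" using closure_minimal[OF sub closed_C] Rc unfolding scaled_closure_def by blast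
  hence "\<kappa> * opnorm R * opnorm R \<le> 0" using rank1_sq[OF rk nR] by (simp add: opn_0)
  moreover have "opnorm R > 0" using rank1_sq(2)[OF rk nR] by (rule opn_pos)
  ultimately show False using kp by (simp add: mult_le_0_iff zero_less_mult_iff)
qed

theorem lemma3p2:
  fixes A :: "(real^2^2) set"
  assumes "\<forall>M\<in>A. invertible M"
    and "rank_one_part A \<noteq> {}"
    and "almost_multiplicative (semigrp A)"
  shows "(\<forall>M\<in>semigrp A. \<not> parabolic M) \<and> (\<forall>M\<in>rank_one_part A. \<not> nilpotent M)"
proof -
  obtain \<kappa> where kp: "\<kappa> > 0" and am: "\<forall>X\<in>semigrp A. \<forall>Y\<in>semigrp A. opnorm (X ** Y) \<ge> \<kappa> * opnorm X * opnorm Y"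
    using assms(3) unfolding almost_multiplicative_def by blast
  show ?thesis using no_para[OF am kp] no_nil[OF am kp] by blast
qed

end
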